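(* For all integers $m\ge1$ and $n,h,r\ge0$, $$\mathcal D_{m,r}(n+h,u)=\sum_{k=0}^n\sum_{j=0}^h\binom nk\,\mathcal D_{m,r}(k,u)\,W_{m,r}(h,j)\,u^j\,j^{\,n-k}m^{\,n-k},$$ with the convention $0^0=1$.
   Context: For integers $m\ge1$, $n,k,r\ge0$, $W_{m,r}(n,k)$ denotes the $r$-Whitney number of the second kind, defined by $\sum_{n\ge k}W_{m,r}(n,k)\frac{z^n}{n!}=\frac{e^{rz}}{k!}\left(\frac{e^{mz}-1}{m}\right)^k$ (and $W_{m,r}(n,k)=0$ if $k<0$ or $k>n$). The $r$-Dowling polynomial is $\mathcal D_{m,r}(n,u):=\sum_{k=0}^nW_{m,r}(n,k)u^k$. *)

theory Defs
  imports "HOL-Computational_Algebra.Formal_Power_Series"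
begin

text \<open>r-Whitney numbers of the second kind, defined via their exponential generating
  function: sum over n of W m r n k z^n/n! = e^(rz)/k! ((e^(mz)-1)/m)^k.
  For k > n the coefficient vanishes automatically.\<close>
definition whitney2 :: "nat \<Rightarrow> nat \<Rightarrow> nat \<Rightarrow> nat \<Rightarrow> real" where
  "whitney2 m r n k =
     fact n * fps_nth (fps_exp (real r) * fps_const (1 / fact k) *
        ((fps_exp (real m) - 1) * fps_const (1 / real m)) ^ k) n"

definition dowling :: "nat \<Rightarrow> nat \<Rightarrow> nat \<Rightarrow> real \<Rightarrow> real" where
  "dowling m r n u = (\<Sum>k=0..n. whitney2 m r n k * u ^ k)"

end

theory Submission
  imports Defs
begin
unbundle fps_syntax

definition XX :: "nat \<Rightarrow> real fps" where
  "XX m = (fps_exp (real m) - 1) * fps_const (1 / real m)"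
definition AA :: "nat \<Rightarrow> nat \<Rightarrow> nat \<Rightarrow> real fps" where
  "AA m r k = fps_exp (real r) * fps_const (1 / fact k) * XX m ^ k"

lemma whitney2_AA: "whitney2 m r n k = fact n * AA m r k $ n"
  unfolding whitney2_def AA_def XX_def by simp

lemma XX0: "XX m $ 0 = 0" by (simp add: XX_def)

lemma XX_pow_nth: "n < k \<Longrightarrow> (XX m ^ k) $ n = 0"
proof (cases "XX m = 0")
  case True then show ?thesis if "n < k" using that by (cases k) auto
next
  case False
  assume "n < k"
  have "subdegree (XX m) \<ge> 1" using False XX0[of m]
    by (metis One_nat_def Suc_leI neq0_conv subdegree_eq_0_iff)
  then have "n < k * subdegree (XX m)" using \<open>n < k\<close>
    by (metis le_trans mult_le_mono2 mult.right_neutral not_le)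
  then show ?thesis by (rule fps_pow_nth_below_subdegree)
qed

lemma AA_nth_zero: "n < k \<Longrightarrow> AA m r k $ n = 0"
  unfolding AA_def fps_mult_nth[of _ "XX m ^ k"] by (auto intro!: sum.neutral XX_pow_nth)

lemma whitney2_zero: "n < k \<Longrightarrow> whitney2 m r n k = 0"
  by (simp add: whitney2_AA AA_nth_zero)

lemma deriv_XX: "m \<ge> 1 \<Longrightarrow> fps_deriv (XX m) = fps_exp (real m)"
  by (simp add: XX_def)

lemma E_XX: "m \<ge> 1 \<Longrightarrow> fps_exp (real m) = fps_const (real m) * XX m + 1"
proof -
  assume "m \<ge> 1"
  have "fps_const (real m) * XX m = (fps_exp (real m) - 1) * (fps_const (real m) * fps_const (1 / real m))"
    by (simp add: XX_def mult_ac)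
  also have "\<dots> = fps_exp (real m) - 1" using \<open>m \<ge> 1\<close> by simp
  finally show ?thesis by simp
qed

lemma deriv_AA_Suc:
  assumes "m \<ge> 1"
  shows "fps_deriv (AA m r (Suc j)) = fps_const (real r + real m * real (Suc j)) * AA m r (Suc j) + AA m r j"
proof -
  define e where "e = fps_exp (real r)"
  define Y where "Y = XX m"
  have dY: "fps_deriv Y = fps_const (real m) * Y + 1" using assms by (simp add: Y_def deriv_XX E_XX)
  have fs: "real (Suc j) * (1 / fact (Suc j)) = 1 / (fact j :: real)" by simp
  have "fps_deriv (AA m r (Suc j)) = fps_deriv (fps_const (1 / fact (Suc j)) * (e * Y ^ Suc j))"
    by (simp add: AA_def e_def Y_def mult_ac)
  also have "\<dots> = fps_const (1 / fact (Suc j)) * (fps_const (real r) * e * Y ^ Suc j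
       + e * (fps_const (real (Suc j)) * (fps_const (real m) * Y + 1) * Y ^ j))"
  proof -
    have dP: "fps_deriv (Y ^ Suc j) = fps_const (real (Suc j)) * fps_deriv Y * Y ^ j"
      by (subst fps_deriv_power) simp
    show ?thesis unfolding fps_deriv_mult_const_left fps_deriv_mult dP
      by (simp add: e_def dY mult_ac)
  qed
  also have "\<dots> = fps_const (1 / fact (Suc j)) * fps_const (real r) * (e * Y ^ Suc j)
      + fps_const (1 / fact (Suc j)) * (fps_const (real m) * fps_const (real (Suc j))) * (e * Y ^ Suc j)
      + fps_const (1 / fact (Suc j)) * fps_const (real (Suc j)) * (e * Y ^ j)"
    by (simp only: algebra_simps power_Suc mult_1_left mult_1_right)
  also have "\<dots> = fps_const (real r + real m * real (Suc j)) * AA m r (Suc j) + AA m r j"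
    by (simp only: fps_const_mult AA_def e_def[symmetric] Y_def[symmetric] fs mult_ac distrib_right distrib_left fps_const_add[symmetric] of_nat_mult[symmetric])
  finally show ?thesis .
qed

lemma deriv_AA_0: "fps_deriv (AA m r 0) = fps_const (real r) * AA m r 0"
  by (simp add: AA_def)

lemma whitney2_rec_Suc:
  assumes "m \<ge> 1"
  shows "whitney2 m r (Suc n) (Suc j) = (real r + real m * real (Suc j)) * whitney2 m r n (Suc j) + whitney2 m r n j"
proof -
  have "whitney2 m r (Suc n) (Suc j) = fact n * fps_deriv (AA m r (Suc j)) $ n"
    by (simp add: whitney2_AA algebra_simps)
  also have "\<dots> = (real r + real m * real (Suc j)) * whitney2 m r n (Suc j) + whitney2 m r n j"
    unfolding deriv_AA_Suc[OF assms] by (simp add: whitney2_AA algebra_simps)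
  finally show ?thesis .
qed

lemma whitney2_rec_0:
  shows "whitney2 m r (Suc n) 0 = real r * whitney2 m r n 0"
proof -
  have "whitney2 m r (Suc n) 0 = fact n * fps_deriv (AA m r 0) $ n"
    by (simp add: whitney2_AA algebra_simps)
  also have "\<dots> = real r * whitney2 m r n 0"
    unfolding deriv_AA_0 by (simp add: whitney2_AA algebra_simps)
  finally show ?thesis .
qed

definition GG :: "nat \<Rightarrow> real \<Rightarrow> real fps" where
  "GG m u = fps_exp u oo XX m"
definition FF :: "nat \<Rightarrow> nat \<Rightarrow> real \<Rightarrow> real fps" where
  "FF m r u = fps_exp (real r) * GG m u"

lemma deriv_FF:
  assumes "m \<ge> 1"
  shows "fps_deriv (FF m r u) = (fps_const (real r) + fps_const u * fps_exp (real m)) * FF m r u"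
proof -
  have "fps_deriv (GG m u) = ((fps_const u * fps_exp u) oo XX m) * fps_exp (real m)"
    unfolding GG_def by (simp only: fps_compose_deriv[OF XX0] deriv_XX[OF assms] fps_exp_deriv)
  also have "\<dots> = fps_const u * GG m u * fps_exp (real m)"
    by (simp add: GG_def fps_const_mult_apply_left)
  finally have "fps_deriv (GG m u) = fps_const u * GG m u * fps_exp (real m)" .
  then show ?thesis by (simp add: FF_def algebra_simps)
qed

lemma GG_nth_ext:
  assumes "t \<le> n"
  shows "GG m u $ t = (\<Sum>k=0..n. u ^ k / fact k * (XX m ^ k) $ t)"
proof -
  have "GG m u $ t = (\<Sum>k=0..t. u ^ k / fact k * (XX m ^ k) $ t)"
    by (simp add: GG_def fps_compose_nth)
  also have "\<dots> = (\<Sum>k=0..n. u ^ k / fact k * (XX m ^ k) $ t)"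
    by (rule sum.mono_neutral_left) (use assms in \<open>auto simp: XX_pow_nth\<close>)
  finally show ?thesis .
qed

lemma FF_nth: "FF m r u $ n = (\<Sum>k=0..n. u ^ k * AA m r k $ n)"
proof -
  have "FF m r u $ n = (\<Sum>i=0..n. real r ^ i / fact i * (\<Sum>k=0..n. u ^ k / fact k * (XX m ^ k) $ (n - i)))"
    unfolding FF_def fps_mult_nth by (intro sum.cong refl, subst GG_nth_ext[where n=n]) auto
  also have "\<dots> = (\<Sum>k=0..n. u ^ k * (\<Sum>i=0..n. real r ^ i / fact i * (1 / fact k) * (XX m ^ k) $ (n - i)))"
    unfolding sum_distrib_left by (subst sum.swap) (simp add: mult_ac)
  also have "\<dots> = (\<Sum>k=0..n. u ^ k * AA m r k $ n)"
    by (simp add: AA_def fps_mult_nth[of _ "XX m ^ _"])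
  finally show ?thesis .
qed

lemma dowling_FF: "dowling m r n u = fact n * FF m r u $ n"
  by (simp add: dowling_def FF_nth whitney2_AA sum_distrib_left mult_ac)

definition PP :: "nat \<Rightarrow> nat \<Rightarrow> real \<Rightarrow> nat \<Rightarrow> real fps" where
  "PP m r u h = (\<Sum>j=0..h. fps_const (whitney2 m r h j * u ^ j) * fps_exp (real j * real m))"

lemma crec:
  assumes "m \<ge> 1"
  shows "whitney2 m r (Suc h) j * u ^ j = (real r + real j * real m) * (whitney2 m r h j * u ^ j)
     + (case j of 0 \<Rightarrow> 0 | Suc i \<Rightarrow> u * (whitney2 m r h i * u ^ i))"
proof (cases j)
  case 0 then show ?thesis by (simp add: whitney2_rec_0)
next
  case (Suc i) then show ?thesis by (simp add: whitney2_rec_Suc[OF assms] algebra_simps)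
qed

lemma PP_Suc:
  assumes "m \<ge> 1"
  shows "PP m r u (Suc h) = (fps_const (real r) + fps_const u * fps_exp (real m)) * PP m r u h + fps_deriv (PP m r u h)"
proof -
  define c where "c = (\<lambda>h j. whitney2 m r h j * u ^ j)"
  define e where "e = (\<lambda>j::nat. fps_exp (real j * real m))"
  have eS: "fps_exp (real m) * e j = e (Suc j)" for j
    by (simp add: e_def fps_exp_add_mult[symmetric] algebra_simps)
  have cz: "c h (Suc h) = 0" by (simp add: c_def whitney2_zero)
  define S1 where "S1 = (\<Sum>j=0..h. fps_const ((real r + real j * real m) * c h j) * e j)"
  define S2 where "S2 = (\<Sum>j=0..h. fps_const (u * c h j) * e (Suc j))"
  have PPe: "PP m r u k = (\<Sum>j=0..k. fps_const (c k j) * e j)" for k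
    by (simp add: PP_def c_def e_def)
  have "PP m r u (Suc h) = (\<Sum>j=0..Suc h. fps_const ((real r + real j * real m) * c h j) * e j)
      + (\<Sum>j=0..Suc h. fps_const (case j of 0 \<Rightarrow> 0 | Suc i \<Rightarrow> u * c h i) * e j)"
    unfolding PPe sum.distrib[symmetric]
    by (intro sum.cong refl) (simp only: c_def crec[OF assms] fps_const_add[symmetric] distrib_right)
  also have "\<dots> = S1 + S2"
  proof -
    have "(\<Sum>j=0..Suc h. fps_const ((real r + real j * real m) * c h j) * e j) = S1"
      unfolding S1_def by (simp add: sum.atLeast0_atMost_Suc cz)
    moreover have "(\<Sum>j=0..Suc h. fps_const (case j of 0 \<Rightarrow> 0 | Suc i \<Rightarrow> u * c h i) * e j) = S2"
      unfolding S2_def by (subst sum.atLeast0_atMost_Suc_shift) simp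
    ultimately show ?thesis by simp
  qed
  also have "\<dots> = (fps_const (real r) + fps_const u * fps_exp (real m)) * PP m r u h + fps_deriv (PP m r u h)"
  proof -
    have "(fps_const (real r) + fps_const u * fps_exp (real m)) * PP m r u h + fps_deriv (PP m r u h)
       = (\<Sum>j=0..h. fps_const (real r) * (fps_const (c h j) * e j)) + (\<Sum>j=0..h. fps_const u * (fps_exp (real m) * (fps_const (c h j) * e j)))
         + (\<Sum>j=0..h. fps_const (c h j) * (fps_const (real j * real m) * e j))"
      unfolding PPe by (simp add: fps_deriv_sum e_def sum_distrib_left sum.distrib distrib_right) (simp only: mult.assoc)
    also have "\<dots> = S1 + S2"
    proof -
      have "fps_const u * (fps_exp (real m) * (fps_const (c h j) * e j)) = fps_const (u * c h j) * e (Suc j)" for j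
        by (simp flip: eS add: mult_ac)
      moreover have "fps_const (real r) * (fps_const (c h j) * e j) + fps_const (c h j) * (fps_const (real j * real m) * e j)
          = fps_const ((real r + real j * real m) * c h j) * e j" for j
        by (simp only: mult.assoc[symmetric] fps_const_mult distrib_right[symmetric] fps_const_add) (simp add: algebra_simps)
      ultimately show ?thesis unfolding S1_def S2_def
        by (simp add: sum.distrib[symmetric] add_ac)
    qed
    finally show ?thesis by simp
  qed
  finally show ?thesis .
qed

lemma PP_0: "PP m r u 0 = 1"
proof -
  have "whitney2 m r 0 0 = 1" by (simp add: whitney2_AA AA_def)
  then show ?thesis by (simp add: PP_def)
qed

lemma deriv_iter:
  assumes "m \<ge> 1"
  shows "(fps_deriv ^^ h) (FF m r u) = FF m r u * PP m r u h"
proof (induction h)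
  case 0 then show ?case by (simp add: PP_0)
next
  case (Suc h)
  have "(fps_deriv ^^ Suc h) (FF m r u) = fps_deriv (FF m r u * PP m r u h)" by (simp add: Suc)
  also have "\<dots> = FF m r u * PP m r u (Suc h)"
    by (simp add: PP_Suc[OF assms] deriv_FF[OF assms] algebra_simps)
  finally show ?case .
qed

lemma nth_iter: "((fps_deriv ^^ h) (f :: real fps)) $ n = f $ (n + h) * fact (n + h) / fact n"
proof (induction h arbitrary: n)
  case 0 then show ?case by simp
next
  case (Suc h)
  have "((fps_deriv ^^ Suc h) f) $ n = real (n + 1) * ((fps_deriv ^^ h) f) $ (n + 1)" by simp
  also have "\<dots> = f $ (n + Suc h) * fact (n + Suc h) / fact n"
  proof -
    have "n + 1 + h = n + Suc h" by simp
    moreover have "(fact (n + 1) :: real) = real (n + 1) * fact n" by simp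
    moreover have "(fact n :: real) \<noteq> 0" by simp
    ultimately show ?thesis unfolding Suc by (simp del: fact_Suc of_nat_add of_nat_Suc)
  qed
  finally show ?case .
qed

lemma PP_nth: "PP m r u h $ t = (\<Sum>j=0..h. whitney2 m r h j * u ^ j * (real j * real m) ^ t / fact t)"
  by (simp add: PP_def fps_sum_nth)

theorem mainTheorem5:
  fixes m n h r :: nat and u :: real
  assumes "m \<ge> 1"
  shows "dowling m r (n + h) u =
    (\<Sum>k=0..n. \<Sum>j=0..h. real (n choose k) * dowling m r k u * whitney2 m r h j
        * u ^ j * real j ^ (n - k) * real m ^ (n - k))"
proof -
  have "dowling m r (n + h) u = fact n * ((fps_deriv ^^ h) (FF m r u)) $ n"
    by (simp add: dowling_FF nth_iter)
  also have "\<dots> = fact n * (\<Sum>k=0..n. FF m r u $ k * PP m r u h $ (n - k))"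
    by (simp add: deriv_iter[OF assms] fps_mult_nth)
  also have "\<dots> = (\<Sum>k=0..n. \<Sum>j=0..h. real (n choose k) * dowling m r k u * whitney2 m r h j
        * u ^ j * real j ^ (n - k) * real m ^ (n - k))"
    unfolding sum_distrib_left
  proof (intro sum.cong refl)
    fix k assume "k \<in> {0..n}"
    then have kn: "k \<le> n" by simp
    show "fact n * (FF m r u $ k * PP m r u h $ (n - k)) = (\<Sum>j=0..h. real (n choose k) * dowling m r k u * whitney2 m r h j
        * u ^ j * real j ^ (n - k) * real m ^ (n - k))"
      unfolding PP_nth binomial_fact[OF kn] dowling_FF sum_distrib_left
      by (intro sum.cong refl) (simp add: field_simps power_mult_distrib)
  qed
  finally show ?thesis .
qed

end
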